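(* Let $(U,\Phi)$ be a complete two-phase quantum walk with an initial state $\Phi\in\mathcal H_0$. Then $(U,\Phi)$ is unitary equivalent to $(U_{r,\sigma},\Phi_{\alpha,\theta})$ for some $0\le r_\varepsilon,\alpha\le1$ ($\varepsilon=+,-$) and $\sigma_i,\theta\in\mathbb R$ ($i=1,2$), where $\Phi_{\alpha,\theta}=\alpha e_1^0+e^{i\theta}\sqrt{1-\alpha^2}\,e_2^0$ and \begin{align*} U_{r,\sigma}={}&\sum_{n\ge0}|e_1^{n-1}\rangle\langle r_+e_1^n+s_+e_2^n|+|e_2^{n+1}\rangle\langle -e^{i\sigma_1}s_+e_1^n+e^{i\sigma_1}r_+e_2^n|\\ &+\sum_{n\le-1}|e_1^{n-1}\rangle\langle r_-e_1^n+e^{i\sigma_2}s_-e_2^n|+|e_2^{n+1}\rangle\langle -s_-e_1^n+e^{i\sigma_2}r_-e_2^n|, \end{align*} with $s_\varepsilon=\sqrt{1-r_\varepsilon^2}$, $r=(r_+,r_-)$, $\sigma=(\sigma_1,\sigma_2)$. Moreover, for $0<r_\varepsilon,r'_\varepsilon,\alpha,\alpha'<1$ and $\sigma_i,\sigma'_i,\theta,\theta'\in[0,2\pi)$, $(U_{r,\sigma},\Phi_{\alpha,\theta})$ and $(U_{r',\sigma'},\Phi_{\alpha',\theta'})$ are unitary equivalent if and only if $r=r'$, $\sigma=\sigma'$, $\alpha=\alpha'$ and $\theta=\theta'$.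
   Context: Let $\mathcal H_n=\mathbb C^2$ for $n\in\mathbb Z$, $\mathcal H=\bigoplus_{n\in\mathbb Z}\mathcal H_n$, $P_n$ the orthogonal projection onto $\mathcal H_n$, and $\{e_1^n,e_2^n\}$ the standard basis of $\mathcal H_n$; each $\mathcal H_n$ is identified with $\mathbb C^2$. Dirac notation: $|x\rangle\langle y|$ is the operator $z\mapsto\langle y,z\rangle x$ (inner product conjugate-linear in the first argument). A one-dimensional quantum walk is a unitary $U$ on $\mathcal H$ with $\operatorname{rank}(P_nUP_m)=1$ if $m=n\pm1$ and $0$ otherwise. Every such $U$ can be written as $U=\sum_{n\in\mathbb Z}|\xi_{n-1,n}\rangle\langle\zeta_{n-1,n}|+|\xi_{n+1,n}\rangle\langle\zeta_{n+1,n}|$, where $\{\xi_{n,n+1},\xi_{n+1,n}\}_{n}$ and $\{\zeta_{n,n+1},\zeta_{n+1,n}\}_{n}$ are orthonormal bases of $\mathcal H$ with $\xi_{n,n+1},\zeta_{n+1,n}\in\mathcal H_n$ and $\xi_{n+1,n},\zeta_{n,n+1}\in\mathcal H_{n+1}$. $U$ is a complete two-phase quantum walk if it has such a representation for which there exist $\xi_1^\pm,\xi_2^\pm,\zeta_1^\pm,\zeta_2^\pm\in\mathbb C^2$ with $\xi_{n,n+1}=\xi_1^+$, $\xi_{n,n-1}=\xi_2^+$, $\zeta_{n-1,n}=\zeta_1^+$, $\zeta_{n+1,n}=\zeta_2^+$ for all $n\ge0$, and the same with superscript $-$ for all $n\le-1$. An initial state is a unit vector $\Phi\in\mathcal H_0$.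 Since a walk $U$ is identified with $e^{i\lambda}U$ and a state $\Phi$ with $e^{i\lambda}\Phi$, pairs $(U,\Phi)$ and $(U',\Phi')$ are called unitary equivalent if there exist $\lambda,\lambda'\in\mathbb R$ and a unitary $W=\bigoplus_nW_n$ ($W_n$ unitary on $\mathcal H_n$) with $e^{i\lambda}WUW^*=U'$ and $e^{i\lambda'}W\Phi=\Phi'$. *)

theory Defs
  imports "HOL-Analysis.Analysis"
begin

text \<open>A vector of H_n = C^2 is an element of complex^2.
  An operator U on H = (+)_n H_n is represented by its block matrix
  U n m = P_n U P_m (a 2x2 complex matrix, viewed as a map H_m -> H_n).\<close>

type_synonym cvec = "complex ^ 2"
type_synonym cmat = "complex ^ 2 ^ 2"
type_synonym blockop = "int \<Rightarrow> int \<Rightarrow> cmat"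

definition e1 :: cvec where "e1 = (\<chi> i. if i = 1 then 1 else 0)"
definition e2 :: cvec where "e2 = (\<chi> i. if i = 2 then 1 else 0)"

definition cinner :: "cvec \<Rightarrow> cvec \<Rightarrow> complex" where
  "cinner x y = (\<Sum>i\<in>UNIV. cnj (x $ i) * y $ i)"

definition ketbra :: "cvec \<Rightarrow> cvec \<Rightarrow> cmat" where
  "ketbra x y = (\<chi> i j. x $ i * cnj (y $ j))"

definition cadj :: "cmat \<Rightarrow> cmat" where
  "cadj A = (\<chi> i j. cnj (A $ j $ i))"

definition unitary2 :: "cmat \<Rightarrow> bool" where
  "unitary2 W \<longleftrightarrow> cadj W ** W = mat 1 \<and> W ** cadj W = mat 1"

definition onb2 :: "cvec \<Rightarrow> cvec \<Rightarrow> bool" where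
  "onb2 a b \<longleftrightarrow> cinner a a = 1 \<and> cinner b b = 1 \<and> cinner a b = 0"

text \<open>Unitarity of the operator with block matrix U: U^*U = I and UU^* = I,
  blockwise. (For the banded operators considered, all these sums have finite support.)\<close>
definition unitary_op :: "blockop \<Rightarrow> bool" where
  "unitary_op U \<longleftrightarrow>
     (\<forall>n m. (\<Sum>\<^sub>\<infinity>k. cadj (U k n) ** U k m) = (if n = m then mat 1 else 0)) \<and>
     (\<forall>n m. (\<Sum>\<^sub>\<infinity>k. U n k ** cadj (U m k)) = (if n = m then mat 1 else 0))"

definition quantum_walk :: "blockop \<Rightarrow> bool" where
  "quantum_walk U \<longleftrightarrow> unitary_op U \<and>
     (\<forall>n m. rank (U n m) = (if m = n + 1 \<or> m = n - 1 then 1 else 0))"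

text \<open>Writing xi_{n,n+1} = xa n, xi_{n,n-1} = xb n,
  zeta_{n-1,n} = za n, zeta_{n+1,n} = zb n (all in H_n), the representation reads
  P_{n-1} U P_n = |xi_{n-1,n}><zeta_{n-1,n}|, P_{n+1} U P_n = |xi_{n+1,n}><zeta_{n+1,n}|.\<close>
definition complete_two_phase :: "blockop \<Rightarrow> bool" where
  "complete_two_phase U \<longleftrightarrow> quantum_walk U \<and>
     (\<exists>x1p x2p z1p z2p x1m x2m z1m z2m :: cvec.
        let xa = (\<lambda>n::int. if n \<ge> 0 then x1p else x1m);
            xb = (\<lambda>n::int. if n \<ge> 0 then x2p else x2m);
            za = (\<lambda>n::int. if n \<ge> 0 then z1p else z1m);
            zb = (\<lambda>n::int. if n \<ge> 0 then z2p else z2m)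
        in (\<forall>n. onb2 (xa n) (xb n) \<and> onb2 (za n) (zb n)) \<and>
           (\<forall>n m. U n m = (if n = m - 1 then ketbra (xa n) (za m)
                           else if n = m + 1 then ketbra (xb n) (zb m)
                           else 0)))"

definition unit_equiv :: "blockop \<Rightarrow> cvec \<Rightarrow> blockop \<Rightarrow> cvec \<Rightarrow> bool" where
  "unit_equiv U \<Phi> U' \<Phi>' \<longleftrightarrow>
     (\<exists>(lam::real) (lam'::real) (W :: int \<Rightarrow> cmat).
        (\<forall>n. unitary2 (W n)) \<and>
        (\<forall>n m. (\<chi> i j. exp (\<i> * of_real lam) * ((W n ** U n m ** cadj (W m)) $ i $ j)) = U' n m) \<and>
        (\<chi> i. exp (\<i> * of_real lam') * ((W 0) *v \<Phi>) $ i) = \<Phi>')"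

definition Urs :: "real \<Rightarrow> real \<Rightarrow> real \<Rightarrow> real \<Rightarrow> blockop" where
  "Urs rp rm \<sigma>1 \<sigma>2 = (\<lambda>n m.
     let sp = sqrt (1 - rp\<^sup>2); sm = sqrt (1 - rm\<^sup>2);
         c1 = exp (\<i> * of_real \<sigma>1); c2 = exp (\<i> * of_real \<sigma>2);
         bra_l = (if m \<ge> 0 then (\<chi> i. if i = 1 then of_real rp else of_real sp)
                  else (\<chi> i. if i = 1 then of_real rm else c2 * of_real sm));
         bra_r = (if m \<ge> 0 then (\<chi> i. if i = 1 then - c1 * of_real sp else c1 * of_real rp)
                  else (\<chi> i. if i = 1 then - of_real sm else c2 * of_real rm))
     in if n = m - 1 then ketbra e1 bra_l
        else if n = m + 1 then ketbra e2 bra_r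
        else 0)"

definition Phi :: "real \<Rightarrow> real \<Rightarrow> cvec" where
  "Phi \<alpha> \<theta> = (\<chi> i. if i = 1 then of_real \<alpha>
                  else exp (\<i> * of_real \<theta>) * of_real (sqrt (1 - \<alpha>\<^sup>2)))"

end

theory Submission
  imports Defs
begin

lemma cs: "cnj z * z = of_real (cmod z ^ 2)" by (metis complex_norm_square mult.commute)

lemma two_ne: "(1::2) \<noteq> 2" by simp

lemma vec2_eq: "(x::'a^2) = y \<longleftrightarrow> x$1 = y$1 \<and> x$2 = y$2"
  by (simp add: vec_eq_iff forall_2)

lemma cinner2: "cinner x y = cnj (x$1) * y$1 + cnj (x$2) * y$2"
  by (simp add: cinner_def sum_2)

lemma mm2: "((A::complex^2^2) ** B)$i$j = A$i$1 * B$1$j + A$i$2 * B$2$j"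
  by (simp add: matrix_matrix_mult_def sum_2)

lemma mv2: "((A::complex^2^2) *v x)$i = A$i$1 * x$1 + A$i$2 * x$2"
  by (simp add: matrix_vector_mult_def sum_2)

lemma core_diag:
  fixes a1 a2 b1 b2 :: complex
  assumes A: "cnj a1 * a1 + cnj a2 * a2 = 1" and B: "cnj b1 * b1 + cnj b2 * b2 = 1"
    and O: "cnj a1 * b1 + cnj a2 * b2 = 0"
  shows "cmod a1 ^ 2 + cmod b1 ^ 2 = 1"
proof -
  have A': "cmod a1 ^ 2 + cmod a2 ^ 2 = 1" using A unfolding cs
    by (metis of_real_1 of_real_add of_real_eq_iff)
  have B': "cmod b1 ^ 2 + cmod b2 ^ 2 = 1" using B unfolding cs
    by (metis of_real_1 of_real_add of_real_eq_iff)
  have "cmod (cnj a1 * b1) = cmod (cnj a2 * b2)" using O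
    by (metis add_eq_0_iff norm_minus_cancel)
  hence "(cmod a1 * cmod b1)^2 = (cmod a2 * cmod b2)^2" by (simp add: norm_mult)
  hence "cmod a1 ^2 * cmod b1 ^2 = cmod a2 ^2 * cmod b2 ^2" by (simp add: power_mult_distrib)
  moreover have "cmod a2 ^2 = 1 - cmod a1 ^2" "cmod b2 ^2 = 1 - cmod b1 ^2" using A' B' by auto
  ultimately have "cmod a1 ^2 * cmod b1 ^2 = (1 - cmod a1^2) * (1 - cmod b1^2)" by simp
  thus ?thesis by (simp add: algebra_simps)
qed

lemma core_all:
  fixes a1 a2 b1 b2 :: complex
  assumes A: "cnj a1 * a1 + cnj a2 * a2 = 1" and B: "cnj b1 * b1 + cnj b2 * b2 = 1"
    and O: "cnj a1 * b1 + cnj a2 * b2 = 0"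
  shows "a1 * cnj a1 + b1 * cnj b1 = 1" "a2 * cnj a2 + b2 * cnj b2 = 1"
    "a1 * cnj a2 + b1 * cnj b2 = 0" "a2 * cnj a1 + b2 * cnj b1 = 0"
proof -
  have d1: "cmod a1 ^ 2 + cmod b1 ^ 2 = 1" by (rule core_diag[OF A B O])
  have d2: "cmod a2 ^ 2 + cmod b2 ^ 2 = 1"
    by (rule core_diag[of a2 a1 b2 b1]) (use A B O in \<open>simp_all add: add.commute\<close>)
  have B': "cmod b1 ^ 2 + cmod b2 ^ 2 = 1" using B unfolding cs
    by (metis of_real_1 of_real_add of_real_eq_iff)
  show g1: "a1 * cnj a1 + b1 * cnj b1 = 1" using d1
    by (metis complex_norm_square of_real_1 of_real_add)
  show g2: "a2 * cnj a2 + b2 * cnj b2 = 1" using d2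
    by (metis complex_norm_square of_real_1 of_real_add)
  have h1: "cnj a1 * a1 = cnj b2 * b2" using d1 B' unfolding cs
    by (metis add_diff_cancel_left' add_diff_cancel_right')
  have h2: "cnj b1 * b1 = cnj a2 * a2" using d2 B' d1 unfolding cs
    by (metis add_diff_cancel_left' add_diff_cancel_right' of_real_power)
  define w where "w = a1 * cnj a2 + b1 * cnj b2"
  have O': "cnj b1 * a1 + cnj b2 * a2 = 0" using arg_cong[OF O, of cnj] by (simp add: mult.commute)
  have w1: "cnj a1 * w = 0" unfolding w_def using h1 O
    by algebra
  have w2: "cnj b1 * w = 0" unfolding w_def using h2 O'
    by algebra
  have "a1 \<noteq> 0 \<or> b1 \<noteq> 0" using d1 by auto
  hence "w = 0" using w1 w2 by auto
  thus g3: "a1 * cnj a2 + b1 * cnj b2 = 0" by (simp add: w_def)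
  show "a2 * cnj a1 + b2 * cnj b1 = 0" using arg_cong[OF g3, of cnj] by (simp add: mult.commute)
qed

lemma onb_compl:
  assumes "onb2 a b"
  shows "a$1 * cnj (a$1) + b$1 * cnj (b$1) = 1" "a$2 * cnj (a$2) + b$2 * cnj (b$2) = 1"
    "a$1 * cnj (a$2) + b$1 * cnj (b$2) = 0" "a$2 * cnj (a$1) + b$2 * cnj (b$1) = 0"
  using core_all[of "a$1" "a$2" "b$1" "b$2"] assms by (auto simp: onb2_def cinner2)

lemma parseval:
  assumes "onb2 a b"
  shows "cinner v w = cnj (cinner a v) * cinner a w + cnj (cinner b v) * cinner b w"
proof -
  note c = onb_compl[OF assms]
  show ?thesis unfolding cinner2 complex_cnj_add complex_cnj_mult complex_cnj_cnj using c by algebra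
qed

definition ph :: "complex \<Rightarrow> complex" where
  "ph z = (if z = 0 then 1 else z / of_real (cmod z))"

lemma ph_unit: "cnj (ph z) * ph z = 1"
  unfolding ph_def cs by (simp add: norm_divide)

lemma ph_unit': "ph z * cnj (ph z) = 1"
  using ph_unit by (simp add: mult.commute)

lemma ph_mod: "of_real (cmod z) * ph z = z"
  unfolding ph_def by simp

lemma ph_cnj: "cnj (ph z) * z = of_real (cmod z)"
proof -
  have "cnj (ph z) * z = cnj (ph z) * (of_real (cmod z) * ph z)" by (simp add: ph_mod)
  also have "\<dots> = of_real (cmod z)" using ph_unit
    by (metis mult.commute mult.left_commute mult.right_neutral)
  finally show ?thesis .
qed

lemma unit_exp: "cnj z * z = 1 \<Longrightarrow> exp (\<i> * of_real (Arg z)) = z"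
proof -
  assume u: "cnj z * z = 1"
  hence "cmod z ^ 2 = 1" unfolding cs by (metis of_real_eq_1_iff)
  hence m: "cmod z = 1" using norm_ge_zero[of z] by (auto simp: power2_eq_1_iff)
  hence "z \<noteq> 0" by auto
  thus ?thesis using m by (simp add: cis_conv_exp[symmetric] cis_Arg sgn_div_norm)
qed

lemma exp_unit: "cnj (exp (\<i> * of_real t)) * exp (\<i> * of_real t) = 1"
  unfolding cs by simp

lemma sandwich: "(W::complex^2^2) ** ketbra x y ** cadj V = ketbra (W *v x) (V *v y)"
  unfolding vec_eq_iff forall_2 by (simp add: mm2 mv2 ketbra_def cadj_def algebra_simps)

definition Wmat :: "complex \<Rightarrow> complex \<Rightarrow> cvec \<Rightarrow> cvec \<Rightarrow> cmat" where
  "Wmat ca cb a b = (\<chi> i j. if i = 1 then ca * cnj (a$j) else cb * cnj (b$j))"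

lemma Wm_v: "(Wmat ca cb a b *v v)$1 = ca * cinner a v" "(Wmat ca cb a b *v v)$2 = cb * cinner b v"
  by (simp_all add: Wmat_def mv2 cinner2 algebra_simps)

lemma Wm_unitary:
  assumes "onb2 a b" "cnj ca * ca = 1" "cnj cb * cb = 1"
  shows "unitary2 (Wmat ca cb a b)"
proof -
  note c = onb_compl[OF assms(1)]
  have o: "cnj (a$1) * a$1 + cnj (a$2) * a$2 = 1" "cnj (b$1) * b$1 + cnj (b$2) * b$2 = 1"
       "cnj (a$1) * b$1 + cnj (a$2) * b$2 = 0"
    using assms(1) by (auto simp: onb2_def cinner2)
  have o2: "cnj (b$1) * a$1 + cnj (b$2) * a$2 = 0" using arg_cong[OF o(3), of cnj]
    by (simp add: mult.commute)
  note u = assms(2,3)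
  have u': "ca * cnj ca = 1" "cb * cnj cb = 1" using u by (simp_all add: mult.commute)
  show ?thesis unfolding unitary2_def vec_eq_iff forall_2
    by (simp add: mm2 cadj_def Wmat_def mat_def) (use c o o2 u u' in algebra)+
qed

lemma norm1_cinner: "norm (v::cvec) = 1 \<Longrightarrow> cinner v v = 1"
proof -
  assume "norm v = 1"
  hence "sqrt (cmod (v$1) ^2 + cmod (v$2) ^2) = 1" by (simp add: norm_vec_def L2_set_def sum_2)
  hence "cmod (v$1) ^2 + cmod (v$2) ^2 = 1" by (metis real_sqrt_eq_1_iff)
  thus ?thesis unfolding cinner2 cs by (metis of_real_1 of_real_add)
qed

lemma km1:
  assumes "cnj e * e = 1" "cnj a * a = 1" "X$1 = a" "X$2 = 0"
    "Y$1 = e*a*L$1" "Y$2 = e*a*L$2"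
  shows "(\<chi> i j. e * (ketbra X Y)$i$j) = ketbra e1 L"
proof -
  have "e * cnj e = 1" "a * cnj a = 1" using assms(1,2) by (simp_all add: mult.commute)
  thus ?thesis using assms unfolding vec_eq_iff forall_2
    by (simp add: ketbra_def e1_def) (metis (no_types, lifting) mult.assoc mult.left_commute mult_1_right)
qed

lemma km2:
  assumes "cnj e * e = 1" "cnj a * a = 1" "X$1 = 0" "X$2 = a"
    "Y$1 = e*a*L$1" "Y$2 = e*a*L$2"
  shows "(\<chi> i j. e * (ketbra X Y)$i$j) = ketbra e2 L"
proof -
  have "e * cnj e = 1" "a * cnj a = 1" using assms(1,2) by (simp_all add: mult.commute)
  thus ?thesis using assms unfolding vec_eq_iff forall_2
    by (simp add: ketbra_def e2_def) (metis (no_types, lifting) mult.assoc mult.left_commute mult_1_right)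
qed

definition BL :: "real \<Rightarrow> real \<Rightarrow> real \<Rightarrow> int \<Rightarrow> cvec" where
  "BL rp rm s2 m = (if m \<ge> 0 then (\<chi> i. if i = 1 then of_real rp else of_real (sqrt (1 - rp\<^sup>2)))
     else (\<chi> i. if i = 1 then of_real rm else exp (\<i> * of_real s2) * of_real (sqrt (1 - rm\<^sup>2))))"

definition BR :: "real \<Rightarrow> real \<Rightarrow> real \<Rightarrow> real \<Rightarrow> int \<Rightarrow> cvec" where
  "BR rp rm s1 s2 m = (if m \<ge> 0 then (\<chi> i. if i = 1 then - exp (\<i> * of_real s1) * of_real (sqrt (1 - rp\<^sup>2))
        else exp (\<i> * of_real s1) * of_real rp)
     else (\<chi> i. if i = 1 then - of_real (sqrt (1 - rm\<^sup>2)) else exp (\<i> * of_real s2) * of_real rm))"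

lemma Urs_l: "Urs rp rm s1 s2 (m - 1) m = ketbra e1 (BL rp rm s2 m)"
  by (simp add: Urs_def Let_def BL_def)

lemma Urs_r: "Urs rp rm s1 s2 (m + 1) m = ketbra e2 (BR rp rm s1 s2 m)"
  by (simp add: Urs_def Let_def BR_def)

lemma Urs_0: "n \<noteq> m - 1 \<Longrightarrow> n \<noteq> m + 1 \<Longrightarrow> Urs rp rm s1 s2 n m = 0"
  by (simp add: Urs_def Let_def)

lemma BL_c: "BL rp rm s2 m $ 1 = (if m \<ge> 0 then of_real rp else of_real rm)"
  "BL rp rm s2 m $ 2 = (if m \<ge> 0 then of_real (sqrt (1 - rp\<^sup>2)) else exp (\<i> * of_real s2) * of_real (sqrt (1 - rm\<^sup>2)))"
  by (simp_all add: BL_def)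

lemma BR_c: "BR rp rm s1 s2 m $ 1 = (if m \<ge> 0 then - exp (\<i> * of_real s1) * of_real (sqrt (1 - rp\<^sup>2)) else - of_real (sqrt (1 - rm\<^sup>2)))"
  "BR rp rm s1 s2 m $ 2 = (if m \<ge> 0 then exp (\<i> * of_real s1) * of_real rp else exp (\<i> * of_real s2) * of_real rm)"
  by (simp_all add: BR_def)

lemma extL0:
  assumes "(\<chi> i j. e * (Wn ** ketbra e1 L ** cadj Wm)$i$j) = ketbra e1 L'" "L'$1 \<noteq> 0"
  shows "(Wn::cmat)$2$1 = 0"
proof -
  from assms(1) have q: "\<And>i j. e * (ketbra (Wn *v e1) (Wm *v L))$i$j = (ketbra e1 L')$i$j"
    unfolding sandwich vec_eq_iff by simp
  have "e * (Wn$1$1 * cnj ((Wm *v L)$1)) = cnj (L'$1)"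
    using q[of 1 1] by (simp add: ketbra_def mv2 e1_def)
  hence "(Wm *v L)$1 \<noteq> 0" using assms(2) by auto
  moreover have "e * (Wn$2$1 * cnj ((Wm *v L)$1)) = 0"
    using q[of 2 1] by (simp add: ketbra_def mv2 e1_def)
  moreover have "e \<noteq> 0" using \<open>e * (Wn$1$1 * cnj ((Wm *v L)$1)) = cnj (L'$1)\<close> assms(2) by auto
  ultimately show ?thesis by simp
qed

lemma extL:
  assumes "(\<chi> i j. e * (Wn ** ketbra e1 L ** cadj Wm)$i$j) = ketbra e1 L'" "(Wm::cmat)$1$2 = 0" "Wm$2$1 = 0"
  shows "e * Wn$1$1 * cnj (Wm$1$1 * L$1) = cnj (L'$1)" "e * Wn$1$1 * cnj (Wm$2$2 * L$2) = cnj (L'$2)"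
proof -
  from assms(1) have q: "\<And>i j. e * (ketbra (Wn *v e1) (Wm *v L))$i$j = (ketbra e1 L')$i$j"
    unfolding sandwich vec_eq_iff by simp
  show "e * Wn$1$1 * cnj (Wm$1$1 * L$1) = cnj (L'$1)"
    using q[of 1 1] assms(2,3) by (simp add: ketbra_def mv2 e1_def mult.assoc)
  show "e * Wn$1$1 * cnj (Wm$2$2 * L$2) = cnj (L'$2)"
    using q[of 1 2] assms(2,3) by (simp add: ketbra_def mv2 e1_def mult.assoc)
qed

lemma extR:
  assumes "(\<chi> i j. e * (Wn ** ketbra e2 L ** cadj Wm)$i$j) = ketbra e2 L'" "(Wm::cmat)$1$2 = 0" "Wm$2$1 = 0"
  shows "e * Wn$2$2 * cnj (Wm$1$1 * L$1) = cnj (L'$1)" "e * Wn$2$2 * cnj (Wm$2$2 * L$2) = cnj (L'$2)"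
proof -
  from assms(1) have q: "\<And>i j. e * (ketbra (Wn *v e2) (Wm *v L))$i$j = (ketbra e2 L')$i$j"
    unfolding sandwich vec_eq_iff by simp
  show "e * Wn$2$2 * cnj (Wm$1$1 * L$1) = cnj (L'$1)"
    using q[of 2 1] assms(2,3) by (simp add: ketbra_def mv2 e2_def mult.assoc)
  show "e * Wn$2$2 * cnj (Wm$2$2 * L$2) = cnj (L'$2)"
    using q[of 2 2] assms(2,3) by (simp add: ketbra_def mv2 e2_def mult.assoc)
qed

lemma unit_diag:
  assumes "unitary2 W" "W$2$1 = 0"
  shows "W$1$2 = 0" "cnj (W$1$1) * W$1$1 = 1" "cnj (W$2$2) * W$2$2 = 1"
proof -
  have m: "cadj W ** W = mat 1" using assms(1) unfolding unitary2_def by simp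
  have h11: "cnj (W$1$1) * W$1$1 = 1"
    using arg_cong[OF m, of "\<lambda>M. M$1$1"] assms(2) by (simp add: mm2 cadj_def mat_def)
  have h12: "cnj (W$1$1) * W$1$2 = 0"
    using arg_cong[OF m, of "\<lambda>M. M$1$2"] assms(2) by (simp add: mm2 cadj_def mat_def)
  have "W$1$1 \<noteq> 0" using h11 by auto
  thus z: "W$1$2 = 0" using h12 by simp
  show "cnj (W$1$1) * W$1$1 = 1" by (rule h11)
  show "cnj (W$2$2) * W$2$2 = 1"
    using arg_cong[OF m, of "\<lambda>M. M$2$2"] z by (simp add: mm2 cadj_def mat_def)
qed

lemma unit_mod: "cnj z * z = 1 \<Longrightarrow> cmod z = 1"
proof -
  assume u: "cnj z * z = 1"
  hence "cmod z ^ 2 = 1" unfolding cs by (metis of_real_eq_1_iff)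
  thus "cmod z = 1" using norm_ge_zero[of z] by (auto simp: power2_eq_1_iff)
qed

lemma exp_inj:
  assumes "exp (\<i> * of_real s) = exp (\<i> * of_real t)" "s \<in> {0..<2*pi}" "t \<in> {0..<2*pi}"
  shows "s = t"
proof -
  have "exp (\<i> * of_real s - \<i> * of_real t) = 1" using assms(1) by (simp add: exp_diff)
  then obtain n :: int where n: "s - t = of_int (2 * n) * pi"
    unfolding exp_eq_1 by (auto simp: algebra_simps)
  have "\<bar>s - t\<bar> < 2 * pi" using assms(2,3) by auto
  hence "\<bar>of_int (2*n) * pi\<bar> < 2 * pi" using n by simp
  hence "\<bar>real_of_int n\<bar> * (2 * pi) < 1 * (2 * pi)" by (simp add: abs_mult)
  hence "\<bar>real_of_int n\<bar> < 1" using pi_gt_zero by (meson mult_less_cancel_right_pos zero_less_mult_iff zero_less_numeral)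
  hence "n = 0" by linarith
  thus ?thesis using n by simp
qed

lemma real_sq_pos: "0 < r \<Longrightarrow> r < 1 \<Longrightarrow> 0 < sqrt (1 - r\<^sup>2)"
  by (simp add: power_less_one_iff abs_square_less_1)

lemma part2:
  fixes rp rm \<alpha> \<sigma>1 \<sigma>2 \<theta> rp' rm' \<alpha>' \<sigma>1' \<sigma>2' \<theta>' :: real
  assumes r: "0 < rp" "rp < 1" "0 < rm" "rm < 1" "0 < \<alpha>" "\<alpha> < 1"
    "0 < rp'" "rp' < 1" "0 < rm'" "rm' < 1" "0 < \<alpha>'" "\<alpha>' < 1"
  and ue: "unit_equiv (Urs rp rm \<sigma>1 \<sigma>2) (Phi \<alpha> \<theta>) (Urs rp' rm' \<sigma>1' \<sigma>2') (Phi \<alpha>' \<theta>')"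
  shows "rp = rp' \<and> rm = rm' \<and> exp (\<i> * of_real \<sigma>1) = exp (\<i> * of_real \<sigma>1') \<and>
     exp (\<i> * of_real \<sigma>2) = exp (\<i> * of_real \<sigma>2') \<and> \<alpha> = \<alpha>' \<and> exp (\<i> * of_real \<theta>) = exp (\<i> * of_real \<theta>')"
proof -
  obtain lam lam' W where Wu: "\<forall>n. unitary2 (W n)"
    and eq: "\<forall>n m. (\<chi> i j. exp (\<i> * of_real lam) * ((W n ** Urs rp rm \<sigma>1 \<sigma>2 n m ** cadj (W m)) $ i $ j)) = Urs rp' rm' \<sigma>1' \<sigma>2' n m"
    and phe: "(\<chi> i. exp (\<i> * of_real lam') * ((W 0) *v Phi \<alpha> \<theta>) $ i) = Phi \<alpha>' \<theta>'"
    using ue unfolding unit_equiv_def by blast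
  define e where "e = exp (\<i> * of_real lam)"
  have eu: "cnj e * e = 1" unfolding e_def by (rule exp_unit)
  have eqL: "\<And>m. (\<chi> i j. e * (W (m - 1) ** ketbra e1 (BL rp rm \<sigma>2 m) ** cadj (W m))$i$j) = ketbra e1 (BL rp' rm' \<sigma>2' m)"
    using eq unfolding e_def by (metis Urs_l)
  have eqR: "\<And>m. (\<chi> i j. e * (W (m + 1) ** ketbra e2 (BR rp rm \<sigma>1 \<sigma>2 m) ** cadj (W m))$i$j) = ketbra e2 (BR rp' rm' \<sigma>1' \<sigma>2' m)"
    using eq unfolding e_def by (metis Urs_r)
  have w21: "W n $2$1 = 0" for n
  proof -
    have "(BL rp' rm' \<sigma>2' (n+1))$1 \<noteq> 0" using r by (simp add: BL_c mult.assoc)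
    thus ?thesis using extL0[OF eqL[of "n+1"]] by simp
  qed
  have w12: "W n $1$2 = 0" and ua: "cnj (W n$1$1) * W n$1$1 = 1" and ub: "cnj (W n$2$2) * W n$2$2 = 1" for n
    using unit_diag[OF Wu[rule_format, of n] w21[of n]] by auto
  define a where "a n = W n $1$1" for n
  define b where "b n = W n $2$2" for n
  have L1: "e * a (m-1) * cnj (a m * (BL rp rm \<sigma>2 m)$1) = cnj ((BL rp' rm' \<sigma>2' m)$1)"
   and L2: "e * a (m-1) * cnj (b m * (BL rp rm \<sigma>2 m)$2) = cnj ((BL rp' rm' \<sigma>2' m)$2)"
   and R1: "e * b (m+1) * cnj (a m * (BR rp rm \<sigma>1 \<sigma>2 m)$1) = cnj ((BR rp' rm' \<sigma>1' \<sigma>2' m)$1)"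
   and R2: "e * b (m+1) * cnj (b m * (BR rp rm \<sigma>1 \<sigma>2 m)$2) = cnj ((BR rp' rm' \<sigma>1' \<sigma>2' m)$2)" for m
    using extL[OF eqL[of m] w12[of m] w21[of m]] extR[OF eqR[of m] w12[of m] w21[of m]]
    unfolding a_def b_def by auto
  define c1 where "c1 = exp (\<i> * of_real \<sigma>1)"
  define c2 where "c2 = exp (\<i> * of_real \<sigma>2)"
  define c1' where "c1' = exp (\<i> * of_real \<sigma>1')"
  define c2' where "c2' = exp (\<i> * of_real \<sigma>2')"
  define sp where "sp = sqrt (1 - rp\<^sup>2)"
  define sm where "sm = sqrt (1 - rm\<^sup>2)"
  define sp' where "sp' = sqrt (1 - rp'\<^sup>2)"
  define sm' where "sm' = sqrt (1 - rm'\<^sup>2)"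
  have spos: "sp > 0" "sm > 0" unfolding sp_def sm_def using r real_sq_pos by auto
  have uc: "cnj c1 * c1 = 1" "cnj c2 * c2 = 1" unfolding c1_def c2_def by (simp_all add: exp_unit)
  note ua' = ua[unfolded a_def[symmetric]] and ub' = ub[unfolded b_def[symmetric]]
  have ea: "cnj e * e = 1" by (rule eu)
  have l01: "e * a (-1) * cnj (a 0) * of_real rp = of_real rp'"
    using L1[of 0] by (simp add: BL_c mult.assoc)
  have "cmod (e * a (-1) * cnj (a 0) * of_real rp) = rp"
    using unit_mod[OF eu] unit_mod[OF ua'[of "-1"]] unit_mod[OF ua'[of 0]] r by (simp add: norm_mult)
  hence rpe: "rp = rp'" using l01 r by simp
  have l0m1: "e * a (-2) * cnj (a (-1)) * of_real rm = of_real rm'"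
    using L1[of "-1"] by (simp add: BL_c mult.assoc)
  have "cmod (e * a (-2) * cnj (a (-1)) * of_real rm) = rm"
    using unit_mod[OF eu] unit_mod[OF ua'[of "-1"]] unit_mod[OF ua'[of "-2"]] r by (simp add: norm_mult)
  hence rme: "rm = rm'" using l0m1 r by simp
  have E1: "e * a (-1) * cnj (a 0) = 1" using l01 rpe r
    by (metis mult_cancel_right2 of_real_eq_0_iff order_less_irrefl)
  have E2: "e * a (-2) * cnj (a (-1)) = 1" using l0m1 rme r
    by (metis mult_cancel_right2 of_real_eq_0_iff order_less_irrefl)
  have E3': "e * a (-1) * cnj (b 0) * of_real sp = of_real sp"
    using L2[of 0] rpe by (simp add: BL_c sp_def mult.assoc)
  have E3: "e * a (-1) * cnj (b 0) = 1" using E3' spos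
    by (metis mult_cancel_right2 of_real_eq_0_iff order_less_irrefl)
  have E4': "e * b 0 * cnj (a (-1)) * of_real sm = of_real sm"
    using R1[of "-1"] rme by (simp add: BR_c sm_def mult.assoc)
  have E4: "e * b 0 * cnj (a (-1)) = 1" using E4' spos
    by (metis mult_cancel_right2 of_real_eq_0_iff order_less_irrefl)
  have E5': "e * b (-1) * cnj (a (-2)) * of_real sm = of_real sm"
    using R1[of "-2"] rme by (simp add: BR_c sm_def mult.assoc)
  have E5: "e * b (-1) * cnj (a (-2)) = 1" using E5' spos
    by (metis mult_cancel_right2 of_real_eq_0_iff order_less_irrefl)
  have E6': "e * a 0 * cnj (b 1) * of_real sp = of_real sp"
    using L2[of 1] rpe by (simp add: BL_c sp_def mult.assoc)
  have E6: "e * a 0 * cnj (b 1) = 1" using E6' spos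
    by (metis mult_cancel_right2 of_real_eq_0_iff order_less_irrefl)
  have E7': "e * b 1 * cnj (a 0) * cnj c1 * of_real sp = cnj c1' * of_real sp"
    using R1[of 0] rpe by (simp add: BR_c sp_def c1_def c1'_def mult_ac)
  have E7: "e * b 1 * cnj (a 0) * cnj c1 = cnj c1'" using E7' spos
    by (metis mult_cancel_right of_real_eq_0_iff order_less_irrefl)
  have E8': "e * b 0 * cnj (b (-1)) * cnj c2 * of_real rm = cnj c2' * of_real rm"
    using R2[of "-1"] rme by (simp add: BR_c c2_def c2'_def mult_ac)
  have E8: "e * b 0 * cnj (b (-1)) * cnj c2 = cnj c2'" using E8' r
    by (metis mult_cancel_right of_real_eq_0_iff order_less_irrefl)
  note U = ea ua'[of 0] ua'[of "-1"] ua'[of "-2"] ub'[of 0] ub'[of 1] ub'[of "-1"]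
  have ee: "e * e = 1" using E1 E3 E4 U by algebra
  have c1e: "cnj c1 = cnj c1'" using E1 E3 E4 E6 E7 U by algebra
  have c2e: "cnj c2 = cnj c2'" using E1 E2 E3 E4 E5 E8 U by algebra
  have ab0: "a 0 = b 0" using E1 E3 U by algebra
  define e' where "e' = exp (\<i> * of_real lam')"
  have eu': "cnj e' * e' = 1" unfolding e'_def by (rule exp_unit)
  have P1: "e' * (a 0 * of_real \<alpha>) = of_real \<alpha>'"
    using arg_cong[OF phe, of "\<lambda>v. v$1"] w12[of 0] unfolding e'_def a_def
    by (simp add: mv2 Phi_def)
  have P2: "e' * (b 0 * (exp (\<i> * of_real \<theta>) * of_real (sqrt (1 - \<alpha>\<^sup>2)))) =
      exp (\<i> * of_real \<theta>') * of_real (sqrt (1 - \<alpha>'\<^sup>2))"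
    using arg_cong[OF phe, of "\<lambda>v. v$2"] w21[of 0] unfolding e'_def b_def
    by (simp add: mv2 Phi_def)
  have "cmod (e' * (a 0 * of_real \<alpha>)) = \<alpha>"
    using unit_mod[OF eu'] unit_mod[OF ua'[of 0]] r by (simp add: norm_mult)
  hence ae: "\<alpha> = \<alpha>'" using P1 r by simp
  have F1: "e' * a 0 = 1" using P1 ae r
    by (metis mult.assoc mult_cancel_right2 of_real_eq_0_iff order_less_irrefl)
  have sa: "sqrt (1 - \<alpha>\<^sup>2) > 0" using r real_sq_pos by auto
  have "(e' * b 0 * exp (\<i> * of_real \<theta>)) * of_real (sqrt (1 - \<alpha>\<^sup>2)) =
      exp (\<i> * of_real \<theta>') * of_real (sqrt (1 - \<alpha>\<^sup>2))" using P2 ae by (simp add: mult_ac)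
  hence "e' * b 0 * exp (\<i> * of_real \<theta>) = exp (\<i> * of_real \<theta>')" using sa
    by (metis mult_cancel_right of_real_eq_0_iff order_less_irrefl)
  hence te: "exp (\<i> * of_real \<theta>) = exp (\<i> * of_real \<theta>')" using F1 ab0 by simp
  show ?thesis using rpe rme ae te c1e c2e unfolding c1_def c2_def c1'_def c2'_def by simp
qed

lemma part2_full:
  fixes rp rm \<alpha> \<sigma>1 \<sigma>2 \<theta> rp' rm' \<alpha>' \<sigma>1' \<sigma>2' \<theta>' :: real
  assumes r: "0 < rp" "rp < 1" "0 < rm" "rm < 1" "0 < \<alpha>" "\<alpha> < 1"
    "0 < rp'" "rp' < 1" "0 < rm'" "rm' < 1" "0 < \<alpha>'" "\<alpha>' < 1"
    and s: "\<sigma>1 \<in> {0..<2*pi}" "\<sigma>2 \<in> {0..<2*pi}" "\<theta> \<in> {0..<2*pi}"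
            "\<sigma>1' \<in> {0..<2*pi}" "\<sigma>2' \<in> {0..<2*pi}" "\<theta>' \<in> {0..<2*pi}"
  shows "unit_equiv (Urs rp rm \<sigma>1 \<sigma>2) (Phi \<alpha> \<theta>) (Urs rp' rm' \<sigma>1' \<sigma>2') (Phi \<alpha>' \<theta>')
     \<longleftrightarrow> rp = rp' \<and> rm = rm' \<and> \<sigma>1 = \<sigma>1' \<and> \<sigma>2 = \<sigma>2' \<and> \<alpha> = \<alpha>' \<and> \<theta> = \<theta>'"
proof
  assume "unit_equiv (Urs rp rm \<sigma>1 \<sigma>2) (Phi \<alpha> \<theta>) (Urs rp' rm' \<sigma>1' \<sigma>2') (Phi \<alpha>' \<theta>')"
  from part2[OF r this] s exp_inj show "rp = rp' \<and> rm = rm' \<and> \<sigma>1 = \<sigma>1' \<and> \<sigma>2 = \<sigma>2' \<and> \<alpha> = \<alpha>' \<and> \<theta> = \<theta>'"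
    by metis
next
  assume "rp = rp' \<and> rm = rm' \<and> \<sigma>1 = \<sigma>1' \<and> \<sigma>2 = \<sigma>2' \<and> \<alpha> = \<alpha>' \<and> \<theta> = \<theta>'"
  moreover have "unit_equiv U P U P" for U P
    unfolding unit_equiv_def
  proof (rule exI[of _ 0], rule exI[of _ 0], rule exI[of _ "\<lambda>_. mat 1"])
    have c: "cadj (mat 1) = mat 1" by (simp add: cadj_def mat_def vec_eq_iff)
    show "(\<forall>n. unitary2 (mat 1)) \<and>
      (\<forall>n m. (\<chi> i j. exp (\<i> * complex_of_real 0) * (mat 1 ** U n m ** cadj (mat 1)) $ i $ j) = U n m) \<and>
      (\<chi> i. exp (\<i> * complex_of_real 0) * (mat 1 *v P) $ i) = P"
      by (simp add: c unitary2_def matrix_mul_lid matrix_mul_rid matrix_vector_mul_lid)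
  qed
  ultimately show "unit_equiv (Urs rp rm \<sigma>1 \<sigma>2) (Phi \<alpha> \<theta>) (Urs rp' rm' \<sigma>1' \<sigma>2') (Phi \<alpha>' \<theta>')" by simp
qed

lemma side:
  assumes "onb2 x1 x2" "onb2 z1 z2"
  defines "p \<equiv> cinner x1 z1" and "q \<equiv> cinner x2 z1" and "u \<equiv> cinner x1 z2" and "v \<equiv> cinner x2 z2"
  shows "cnj p * p + cnj q * q = 1" "u = - (v * p - u * q) * cnj q" "v = (v * p - u * q) * cnj p"
    "cnj (v * p - u * q) * (v * p - u * q) = 1"
proof -
  have z: "cinner z1 z1 = 1" "cinner z2 z2 = 1" "cinner z1 z2 = 0" using assms(2) by (auto simp: onb2_def)
  have h1: "cnj p * p + cnj q * q = 1" using parseval[OF assms(1), of z1 z1] z unfolding p_def q_def by simp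
  have h2: "cnj p * u + cnj q * v = 0" using parseval[OF assms(1), of z1 z2] z unfolding p_def q_def u_def v_def by simp
  have h3: "cnj u * u + cnj v * v = 1" using parseval[OF assms(1), of z2 z2] z unfolding u_def v_def by simp
  have h2': "p * cnj u + q * cnj v = 0" using arg_cong[OF h2, of cnj] by simp
  show "cnj p * p + cnj q * q = 1" by (rule h1)
  show g1: "u = - (v * p - u * q) * cnj q" using h1 h2 by algebra
  show g2: "v = (v * p - u * q) * cnj p" using h1 h2 by algebra
  show "cnj (v * p - u * q) * (v * p - u * q) = 1"
    unfolding complex_cnj_diff complex_cnj_mult using h1 h2 h2' h3 by algebra
qed

lemma cmod_le1: "cnj p * p + cnj q * q = 1 \<Longrightarrow> cmod p \<le> 1 \<and> cmod p ^ 2 + cmod q ^ 2 = 1"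
proof -
  assume "cnj p * p + cnj q * q = 1"
  hence h: "cmod p ^ 2 + cmod q ^ 2 = 1" unfolding cs by (metis of_real_1 of_real_add of_real_eq_iff)
  hence "cmod p ^ 2 \<le> 1" by (smt (verit) zero_le_power2)
  hence "cmod p \<le> 1" by (simp add: power_le_one_iff)
  thus ?thesis using h by simp
qed

lemma sqrt_comp: "cmod p ^ 2 + cmod q ^ 2 = 1 \<Longrightarrow> sqrt (1 - (cmod p)\<^sup>2) = cmod q"
  by (metis add_diff_cancel_left' norm_ge_zero real_sqrt_abs abs_of_nonneg)

lemma exp_half: "exp (\<i> * of_real (t / 2)) * exp (\<i> * of_real (t / 2)) = exp (\<i> * of_real t)"
proof -
  have "\<i> * of_real (t / 2) + \<i> * of_real (t / 2) = \<i> * (of_real t :: complex)"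
    by (simp flip: distrib_left of_real_add)
  thus ?thesis by (simp add: mult_exp_exp)
qed

lemma ph_unit_mod: "cmod (ph z) = 1" using unit_mod[OF ph_unit] .

lemma ph_cnj2: "cnj z = cnj (ph z) * of_real (cmod z)"
  using arg_cong[OF ph_mod[of z], of cnj] by (simp add: mult.commute)

lemma uprod: "cnj x * x = 1 \<Longrightarrow> cnj y * y = 1 \<Longrightarrow> cnj (x * y) * (x * y) = 1"
  by (metis complex_cnj_mult mult.assoc mult.left_commute mult_1_right)

lemma upow: "cnj x * x = 1 \<Longrightarrow> cnj (x ^ k) * x ^ k = 1"
  by (metis complex_cnj_power power_mult_distrib power_one)

lemma ucnj: "cnj x * x = 1 \<Longrightarrow> cnj (cnj x) * cnj x = 1"
  by (simp add: mult.commute)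

lemma part1:
  assumes ctp: "complete_two_phase U" and nPhi: "norm \<Phi> = 1"
  shows "\<exists>rp rm \<alpha> \<sigma>1 \<sigma>2 \<theta> :: real.
               0 \<le> rp \<and> rp \<le> 1 \<and> 0 \<le> rm \<and> rm \<le> 1 \<and> 0 \<le> \<alpha> \<and> \<alpha> \<le> 1 \<and>
               unit_equiv U \<Phi> (Urs rp rm \<sigma>1 \<sigma>2) (Phi \<alpha> \<theta>)"
proof -
  obtain x1p x2p z1p z2p x1m x2m z1m z2m :: cvec where
    on: "\<forall>n::int. onb2 (if n \<ge> 0 then x1p else x1m) (if n \<ge> 0 then x2p else x2m) \<and>
                  onb2 (if n \<ge> 0 then z1p else z1m) (if n \<ge> 0 then z2p else z2m)"
    and Ueq: "\<forall>n m. U n m = (if n = m - 1 then ketbra (if n \<ge> 0 then x1p else x1m) (if m \<ge> 0 then z1p else z1m)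
                           else if n = m + 1 then ketbra (if n \<ge> 0 then x2p else x2m) (if m \<ge> 0 then z2p else z2m)
                           else 0)"
    using ctp unfolding complete_two_phase_def Let_def by blast
  define xa where "xa n = (if n \<ge> 0 then x1p else x1m)" for n :: int
  define xb where "xb n = (if n \<ge> 0 then x2p else x2m)" for n :: int
  define za where "za n = (if n \<ge> 0 then z1p else z1m)" for n :: int
  define zb where "zb n = (if n \<ge> 0 then z2p else z2m)" for n :: int
  have onx: "onb2 (xa n) (xb n)" and onz: "onb2 (za n) (zb n)" for n
    using on unfolding xa_def xb_def za_def zb_def by auto
  have Ueq': "U n m = (if n = m - 1 then ketbra (xa n) (za m) else if n = m + 1 then ketbra (xb n) (zb m) else 0)" for n m
    using Ueq unfolding xa_def xb_def za_def zb_def by auto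
  have oxp: "onb2 x1p x2p" and ozp: "onb2 z1p z2p" using on[rule_format, of 0] by auto
  have oxm: "onb2 x1m x2m" and ozm: "onb2 z1m z2m" using on[rule_format, of "-1"] by auto
  define pP where "pP = cinner x1p z1p"
  define qP where "qP = cinner x2p z1p"
  define uP where "uP = cinner x1p z2p"
  define vP where "vP = cinner x2p z2p"
  define pM where "pM = cinner x1m z1m"
  define qM where "qM = cinner x2m z1m"
  define uM where "uM = cinner x1m z2m"
  define vM where "vM = cinner x2m z2m"
  define dP where "dP = vP * pP - uP * qP"
  define dM where "dM = vM * pM - uM * qM"
  note sP = side[OF oxp ozp, folded pP_def qP_def uP_def vP_def, folded dP_def]
  note sM = side[OF oxm ozm, folded pM_def qM_def uM_def vM_def, folded dM_def]
  define rp where "rp = cmod pP"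
  define rm where "rm = cmod pM"
  have bP: "rp \<le> 1" "sqrt (1 - rp\<^sup>2) = cmod qP" using cmod_le1[OF sP(1)] sqrt_comp unfolding rp_def by auto
  have bM: "rm \<le> 1" "sqrt (1 - rm\<^sup>2) = cmod qM" using cmod_le1[OF sM(1)] sqrt_comp unfolding rm_def by auto
  define E where "E = dM * cnj (ph qM) * ph qP"
  have EU: "cnj E * E = 1" unfolding E_def using sM(4) ph_unit[of qM] ph_unit[of qP]
    by (intro uprod ucnj ph_unit sM(4))
  define lam where "lam = Arg E / 2"
  define e where "e = exp (\<i> * of_real lam)"
  have ee: "e * e = E" unfolding e_def lam_def exp_half using unit_exp[OF EU] .
  have eU: "cnj e * e = 1" unfolding e_def by (rule exp_unit)
  define c1 where "c1 = dP * cnj e * cnj e"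
  define c2 where "c2 = ph qM * cnj (ph qP)"
  have c1U: "cnj c1 * c1 = 1" unfolding c1_def using sP(4) eU
    by (intro uprod ucnj eU sP(4))
  have c2U: "cnj c2 * c2 = 1" unfolding c2_def using ph_unit[of qM] ph_unit[of qP]
    by (intro uprod ucnj ph_unit)
  define \<sigma>1 where "\<sigma>1 = Arg c1"
  define \<sigma>2 where "\<sigma>2 = Arg c2"
  have c1e: "exp (\<i> * of_real \<sigma>1) = c1" unfolding \<sigma>1_def by (rule unit_exp[OF c1U])
  have c2e: "exp (\<i> * of_real \<sigma>2) = c2" unfolding \<sigma>2_def by (rule unit_exp[OF c2U])
  define wP where "wP = e * cnj (ph pP)"
  define wM where "wM = e * cnj (ph pM)"
  have wPU: "cnj wP * wP = 1" unfolding wP_def using eU ph_unit'[of pP]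
    by (intro uprod ucnj eU ph_unit)
  have wMU: "cnj wM * wM = 1" unfolding wM_def using eU ph_unit'[of pM]
    by (intro uprod ucnj eU ph_unit)
  define a where "a m = (if m \<ge> 0 then wP ^ nat m else cnj wP * cnj wM ^ nat (- m - 1))" for m :: int
  define KP where "KP = cnj (ph qP)"
  define KM where "KM = c2 * cnj (ph qM)"
  define b where "b m = (if m \<ge> 0 then e * a (m - 1) * KP else e * a (m - 1) * KM)" for m :: int
  have aU: "cnj (a m) * a m = 1" for m
  proof (cases "m \<ge> 0")
    case True thus ?thesis unfolding a_def using upow[OF wPU, of "nat m"] by simp
  next
    case False thus ?thesis unfolding a_def
      using uprod[OF ucnj[OF wPU] ucnj[OF upow[OF wMU, of "nat (-m-1)"]]] by simp
  qed
  have aP: "a m = wP * a (m - 1)" if "m \<ge> 0" for m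
  proof (cases "m = 0")
    case True thus ?thesis using wPU unfolding a_def by (simp add: mult.commute)
  next
    case False
    hence "nat m = Suc (nat (m - 1))" using that by simp
    thus ?thesis using that False unfolding a_def by simp
  qed
  have aM: "a m = wM * a (m - 1)" if "m < 0" for m
  proof -
    have "nat (- (m - 1) - 1) = Suc (nat (- m - 1))" using that by simp
    hence "a (m - 1) = cnj wP * cnj wM * cnj wM ^ nat (- m - 1)" unfolding a_def using that by simp
    hence "wM * a (m - 1) = (cnj wM * wM) * (cnj wP * cnj wM ^ nat (- m - 1))" by (simp add: mult_ac)
    also have "\<dots> = a m" using wMU that unfolding a_def by simp
    finally show ?thesis by simp
  qed
  have KPM: "KP = KM" unfolding KP_def KM_def c2_def using ph_unit[of qM]
    by (metis mult.commute mult.left_commute mult_1_right)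
  have bP1: "b (m + 1) = e * a m * KP" if "m \<ge> 0" for m using that unfolding b_def by simp
  have bM1: "b (m + 1) = e * a m * KM" if "m < 0" for m using that KPM unfolding b_def by auto
  have KPU: "cnj KP * KP = 1" unfolding KP_def using ph_unit'[of qP] by simp
  have KMU: "cnj KM * KM = 1" unfolding KM_def using c2U ph_unit'[of qM]
    by (intro uprod ucnj c2U ph_unit)
  have bU: "cnj (b m) * b m = 1" for m
    unfolding b_def using uprod[OF uprod[OF eU aU[of "m-1"]] KPU] uprod[OF uprod[OF eU aU[of "m-1"]] KMU]
    by simp
  define W where "W n = Wmat (a n) (b n) (xa n) (xb n)" for n
  have WU: "\<forall>n. unitary2 (W n)" unfolding W_def using Wm_unitary onx aU bU by blast
  have cinner_sym: "cinner y x = cnj (cinner x y)" for x y by (simp add: cinner2 mult.commute)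
  have cxx: "cinner (xa n) (xa n) = 1" "cinner (xb n) (xa n) = 0" "cinner (xa n) (xb n) = 0" "cinner (xb n) (xb n) = 1" for n
    using onx[of n] cinner_sym[of "xa n" "xb n"] by (auto simp: onb2_def)
  have Wv: "(W n *v v)$1 = a n * cinner (xa n) v" "(W n *v v)$2 = b n * cinner (xb n) v" for n v
    unfolding W_def by (rule Wm_v)+
  have peq: "cinner (xa m) (za m) = (if m \<ge> 0 then pP else pM)"
     "cinner (xb m) (za m) = (if m \<ge> 0 then qP else qM)"
     "cinner (xa m) (zb m) = (if m \<ge> 0 then uP else uM)"
     "cinner (xb m) (zb m) = (if m \<ge> 0 then vP else vM)" for m
    unfolding xa_def xb_def za_def zb_def pP_def qP_def uP_def vP_def pM_def qM_def uM_def vM_def by auto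
  have rpq: "of_real rp = cnj (ph pP) * pP" "of_real rm = cnj (ph pM) * pM"
     "of_real (cmod qP) = cnj (ph qP) * qP" "of_real (cmod qM) = cnj (ph qM) * qM"
    unfolding rp_def rm_def by (simp_all add: ph_cnj)
  have cq: "cnj qP = cnj (ph qP) * of_real (cmod qP)" "cnj qM = cnj (ph qM) * of_real (cmod qM)"
     "cnj pP = cnj (ph pP) * of_real rp" "cnj pM = cnj (ph pM) * of_real rm"
    unfolding rp_def rm_def by (rule ph_cnj2)+
  have main: "(\<chi> i j. e * (W n ** U n m ** cadj (W m)) $ i $ j) = Urs rp rm \<sigma>1 \<sigma>2 n m" for n m
  proof (cases "n = m - 1")
    case True
    hence U1: "U n m = ketbra (xa n) (za m)" using Ueq' by simp
    have R1: "Urs rp rm \<sigma>1 \<sigma>2 n m = ketbra e1 (BL rp rm \<sigma>2 m)" using True Urs_l by simp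
    have Y1: "(W m *v za m)$1 = e * a n * BL rp rm \<sigma>2 m $ 1"
    proof (cases "m \<ge> 0")
      case True
      thus ?thesis using aP[OF True] rpq(1) \<open>n = m - 1\<close> unfolding Wv peq BL_c wP_def by (simp; algebra)
    next
      case False
      thus ?thesis using aM[of m] rpq(2) \<open>n = m - 1\<close> unfolding Wv peq BL_c wM_def by (simp; algebra)
    qed
    have Y2: "(W m *v za m)$2 = e * a n * BL rp rm \<sigma>2 m $ 2"
    proof (cases "m \<ge> 0")
      case True
      thus ?thesis using rpq(3) bP(2) \<open>n = m - 1\<close> unfolding Wv peq BL_c b_def KP_def by (simp; algebra)
    next
      case False
      thus ?thesis using rpq(4) bM(2) c2e \<open>n = m - 1\<close> unfolding Wv peq BL_c b_def KM_def by (simp; algebra)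
    qed
    show ?thesis unfolding U1 R1 sandwich
      by (rule km1[OF eU aU[of n]]) (use Y1 Y2 in \<open>simp_all add: Wv cxx\<close>)
  next
    case False
    note F = False
    show ?thesis
    proof (cases "n = m + 1")
      case True
      hence U1: "U n m = ketbra (xb n) (zb m)" using Ueq' F by simp
      have R1: "Urs rp rm \<sigma>1 \<sigma>2 n m = ketbra e2 (BR rp rm \<sigma>1 \<sigma>2 m)" using True Urs_r by simp
      have Y1: "(W m *v zb m)$1 = e * b n * BR rp rm \<sigma>1 \<sigma>2 m $ 1"
      proof (cases "m \<ge> 0")
        case True
        have g: "a m * uP = e * (e * a m * KP) * (- c1 * of_real (cmod qP))"
          using sP(2) cq(1) eU unfolding c1_def KP_def by algebra
        thus ?thesis using True bP1[OF True] bP(2) c1e \<open>n = m + 1\<close>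
          by (simp add: Wv peq BR_c)
      next
        case False
        hence "m < 0" by simp
        have g: "a m * uM = e * (e * a m * KM) * (- of_real (cmod qM))"
          using sM(2) cq(2) ee ph_unit[of qM] ph_unit[of qP] unfolding KM_def c2_def E_def by algebra
        thus ?thesis using False bM1[OF \<open>m < 0\<close>] bM(2) c2e \<open>n = m + 1\<close>
          by (simp add: Wv peq BR_c)
      qed
      have Y2: "(W m *v zb m)$2 = e * b n * BR rp rm \<sigma>1 \<sigma>2 m $ 2"
      proof (cases "m \<ge> 0")
        case True
        have g: "(e * a (m - 1) * KP) * vP = e * (e * a m * KP) * (c1 * of_real rp)"
          using aP[OF True] sP(3) cq(3) eU unfolding c1_def wP_def by algebra
        thus ?thesis using True bP1[OF True] c1e \<open>n = m + 1\<close>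
          by (simp add: Wv peq BR_c b_def)
      next
        case False
        hence "m < 0" by simp
        have g: "(e * a (m - 1) * KM) * vM = e * (e * a m * KM) * (c2 * of_real rm)"
          using aM[OF \<open>m < 0\<close>] sM(3) cq(4) ee ph_unit[of qM] ph_unit[of qP]
          unfolding wM_def E_def c2_def KM_def by algebra
        thus ?thesis using False bM1[OF \<open>m < 0\<close>] c2e \<open>n = m + 1\<close>
          by (simp add: Wv peq BR_c b_def)
      qed
      show ?thesis unfolding U1 R1 sandwich
        by (rule km2[OF eU bU[of n]]) (use Y1 Y2 in \<open>simp_all add: Wv cxx\<close>)
    next
      case False
      hence "U n m = 0" "Urs rp rm \<sigma>1 \<sigma>2 n m = 0" using F Ueq' Urs_0 by auto
      thus ?thesis by (simp add: vec_eq_iff mm2)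
    qed
  qed
  define f1 where "f1 = cinner x1p \<Phi>"
  define f2 where "f2 = cinner x2p \<Phi>"
  have ff: "cnj f1 * f1 + cnj f2 * f2 = 1"
    using parseval[OF oxp, of \<Phi> \<Phi>] norm1_cinner[OF nPhi] unfolding f1_def f2_def by simp
  define \<alpha> where "\<alpha> = cmod f1"
  have bA: "\<alpha> \<le> 1" "sqrt (1 - \<alpha>\<^sup>2) = cmod f2" using cmod_le1[OF ff] sqrt_comp unfolding \<alpha>_def by auto
  define e' where "e' = cnj (ph f1)"
  have e'U: "cnj e' * e' = 1" unfolding e'_def by (intro ucnj ph_unit)
  define lam' where "lam' = Arg e'"
  define \<theta> where "\<theta> = Arg (e' * b 0 * ph f2)"
  have thU: "exp (\<i> * of_real \<theta>) = e' * b 0 * ph f2" unfolding \<theta>_def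
    by (rule unit_exp) (intro uprod e'U bU ph_unit)
  have a0: "a 0 = 1" unfolding a_def by simp
  have phe: "(\<chi> i. exp (\<i> * of_real lam') * ((W 0) *v \<Phi>) $ i) = Phi \<alpha> \<theta>"
    unfolding vec2_eq lam'_def unit_exp[OF e'U]
    using a0 bA(2) thU ph_mod[of f2] ph_cnj[of f1]
    by (simp add: Wv Phi_def \<alpha>_def e'_def f1_def f2_def xa_def xb_def mult_ac)
  have "unit_equiv U \<Phi> (Urs rp rm \<sigma>1 \<sigma>2) (Phi \<alpha> \<theta>)"
    unfolding unit_equiv_def using WU main phe unfolding e_def by blast
  thus ?thesis using bP(1) bM(1) bA(1) unfolding rp_def rm_def \<alpha>_def by (intro exI conjI) auto
qed

theorem theorem3p5:
  shows "(\<forall>(U::blockop) (\<Phi>::cvec). complete_two_phase U \<and> norm \<Phi> = 1 \<longrightarrow>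
            (\<exists>rp rm \<alpha> \<sigma>1 \<sigma>2 \<theta> :: real.
               0 \<le> rp \<and> rp \<le> 1 \<and> 0 \<le> rm \<and> rm \<le> 1 \<and> 0 \<le> \<alpha> \<and> \<alpha> \<le> 1 \<and>
               unit_equiv U \<Phi> (Urs rp rm \<sigma>1 \<sigma>2) (Phi \<alpha> \<theta>)))
       \<and>
         (\<forall>rp rm \<alpha> \<sigma>1 \<sigma>2 \<theta> rp' rm' \<alpha>' \<sigma>1' \<sigma>2' \<theta>' :: real.
            0 < rp \<and> rp < 1 \<and> 0 < rm \<and> rm < 1 \<and> 0 < \<alpha> \<and> \<alpha> < 1 \<and>
            0 < rp' \<and> rp' < 1 \<and> 0 < rm' \<and> rm' < 1 \<and> 0 < \<alpha>' \<and> \<alpha>' < 1 \<and>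
            \<sigma>1 \<in> {0..<2*pi} \<and> \<sigma>2 \<in> {0..<2*pi} \<and> \<theta> \<in> {0..<2*pi} \<and>
            \<sigma>1' \<in> {0..<2*pi} \<and> \<sigma>2' \<in> {0..<2*pi} \<and> \<theta>' \<in> {0..<2*pi} \<longrightarrow>
            (unit_equiv (Urs rp rm \<sigma>1 \<sigma>2) (Phi \<alpha> \<theta>) (Urs rp' rm' \<sigma>1' \<sigma>2') (Phi \<alpha>' \<theta>')
             \<longleftrightarrow> rp = rp' \<and> rm = rm' \<and> \<sigma>1 = \<sigma>1' \<and> \<sigma>2 = \<sigma>2' \<and> \<alpha> = \<alpha>' \<and> \<theta> = \<theta>'))"
proof (intro conjI allI impI)
  fix U :: blockop and \<Phi> :: cvec assume "complete_two_phase U \<and> norm \<Phi> = 1"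
  thus "\<exists>rp rm \<alpha> \<sigma>1 \<sigma>2 \<theta> :: real.
               0 \<le> rp \<and> rp \<le> 1 \<and> 0 \<le> rm \<and> rm \<le> 1 \<and> 0 \<le> \<alpha> \<and> \<alpha> \<le> 1 \<and>
               unit_equiv U \<Phi> (Urs rp rm \<sigma>1 \<sigma>2) (Phi \<alpha> \<theta>)" using part1 by blast
next
  fix rp rm \<alpha> \<sigma>1 \<sigma>2 \<theta> rp' rm' \<alpha>' \<sigma>1' \<sigma>2' \<theta>' :: real
  assume h: "0 < rp \<and> rp < 1 \<and> 0 < rm \<and> rm < 1 \<and> 0 < \<alpha> \<and> \<alpha> < 1 \<and>
            0 < rp' \<and> rp' < 1 \<and> 0 < rm' \<and> rm' < 1 \<and> 0 < \<alpha>' \<and> \<alpha>' < 1 \<and>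
            \<sigma>1 \<in> {0..<2*pi} \<and> \<sigma>2 \<in> {0..<2*pi} \<and> \<theta> \<in> {0..<2*pi} \<and>
            \<sigma>1' \<in> {0..<2*pi} \<and> \<sigma>2' \<in> {0..<2*pi} \<and> \<theta>' \<in> {0..<2*pi}"
  show "unit_equiv (Urs rp rm \<sigma>1 \<sigma>2) (Phi \<alpha> \<theta>) (Urs rp' rm' \<sigma>1' \<sigma>2') (Phi \<alpha>' \<theta>')
             \<longleftrightarrow> rp = rp' \<and> rm = rm' \<and> \<sigma>1 = \<sigma>1' \<and> \<sigma>2 = \<sigma>2' \<and> \<alpha> = \<alpha>' \<and> \<theta> = \<theta>'"
    using h by (intro part2_full) auto
qed

end
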